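(* Let $m\ge 2$, let $A=(A(i,j))_{i,j=0}^{m-1}$ be a primitive matrix with entries in $\{0,1\}$, and let $q>1$. Then there exists a unique vector $(t_i)_{i=0}^{m-1}$ satisfying $$t_i^q = \sum_{j=0}^{m-1} A(i,j)\, t_j,\qquad t_i>1,\qquad i=0,\dots,m-1.$$
   Context: A non-negative matrix is primitive if some power of it has all entries strictly positive. *)

theory Defs
  imports "HOL-Analysis.Analysis"
begin

text \<open>Matrix power of a square matrix (index type 'n plays the role of {0..m-1}).\<close>
primrec matrix_pow :: "real^'n^'n \<Rightarrow> nat \<Rightarrow> real^'n^'n" where
  "matrix_pow A 0 = mat 1"
| "matrix_pow A (Suc k) = A ** matrix_pow A k"

definition primitive_matrix :: "real^'n^'n \<Rightarrow> bool" where
  "primitive_matrix A \<longleftrightarrow> (\<forall>i j. A $ i $ j \<ge> 0) \<and>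
     (\<exists>k. \<forall>i j. matrix_pow A k $ i $ j > 0)"

end

theory Submission
  imports Defs
begin

lemma exists_other:
  assumes "CARD('n::finite) \<ge> 2"
  shows "\<exists>j::'n. j \<noteq> i"
proof (rule ccontr)
  assume "\<not> ?thesis"
  then have "(UNIV::'n set) = {i}" by auto
  then have "card (UNIV::'n set) = card {i}" by (rule arg_cong)
  then show False using assms by simp
qed

lemma row_nonzero:
  fixes A :: "real^'n^'n"
  assumes "primitive_matrix A" "CARD('n) \<ge> 2"
  shows "\<exists>j. A$i$j \<noteq> 0"
proof (rule ccontr)
  assume "\<not> ?thesis"
  then have z: "\<forall>j. A$i$j = 0" by auto
  obtain k where k: "\<forall>i j. matrix_pow A k $ i $ j > 0"
    using assms(1) unfolding primitive_matrix_def by auto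
  show False
  proof (cases k)
    case 0
    obtain j where "j \<noteq> i" using exists_other[OF assms(2)] by blast
    then have "matrix_pow A k $ i $ j = 0" using 0 by (simp add: mat_def)
    then show False using k by (metis less_irrefl)
  next
    case (Suc k')
    have "matrix_pow A k $ i $ i = 0" using Suc z by (simp add: matrix_matrix_mult_def)
    then show False using k by (metis less_irrefl)
  qed
qed

lemma row_one:
  fixes A :: "real^'n^'n"
  assumes "primitive_matrix A" "CARD('n) \<ge> 2" "\<forall>i j. A $ i $ j \<in> {0, 1}"
  shows "\<exists>j. A$i$j = 1"
  using row_nonzero[OF assms(1,2), of i] assms(3) by auto

lemma uniq_le:
  fixes A :: "real^'n^'n" and q :: real
  assumes A01: "\<forall>i j. A $ i $ j \<in> {0, 1}" and q: "q > 1"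
    and s: "\<forall>i. s $ i powr q = (\<Sum>j\<in>UNIV. A $ i $ j * s $ j) \<and> s $ i > 1"
    and t: "\<forall>i. t $ i powr q = (\<Sum>j\<in>UNIV. A $ i $ j * t $ j) \<and> t $ i > 1"
  shows "s $ i \<le> t $ i"
proof -
  define c where "c = Max ((\<lambda>i. s$i / t$i) ` UNIV)"
  have cj: "s$j / t$j \<le> c" for j unfolding c_def by (rule Max_ge) auto
  have tp: "t$j > 0" for j using t by (meson less_trans zero_less_one)
  have sp: "s$j > 0" for j using s by (meson less_trans zero_less_one)
  have sj: "s$j \<le> c * t$j" for j
    using cj[of j] tp[of j] by (simp add: pos_divide_le_eq mult.commute)
  have "c \<in> (\<lambda>i. s$i/t$i) ` UNIV" unfolding c_def by (rule Max_in) auto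
  then obtain i0 where i0: "c = s$i0 / t$i0" by auto
  have t0: "t$i0 > 0" using tp by auto
  have s0: "s$i0 > 0" using sp by auto
  have cpos: "c > 0" using i0 t0 s0 by simp
  have si: "s$i0 = c * t$i0" using i0 t0 by simp
  have Anon: "A$a$b \<ge> 0" for a b using A01 by (metis insert_iff order_refl singletonD zero_le_one)
  have "s$i0 powr q = (\<Sum>j\<in>UNIV. A $ i0 $ j * s $ j)" using s by auto
  also have "\<dots> \<le> (\<Sum>j\<in>UNIV. A $ i0 $ j * (c * t $ j))"
    by (rule sum_mono) (simp add: Anon mult_left_mono sj)
  also have "\<dots> = c * (\<Sum>j\<in>UNIV. A $ i0 $ j * t $ j)"
    by (simp add: sum_distrib_left algebra_simps)
  also have "\<dots> = c * t$i0 powr q" using t by auto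
  finally have le: "s$i0 powr q \<le> c * t$i0 powr q" .
  have "s$i0 powr q = c powr q * t$i0 powr q" using si cpos t0 by (simp add: powr_mult)
  with le have "c powr q * t$i0 powr q \<le> c * t$i0 powr q" by simp
  then have cq: "c powr q \<le> c" using t0 by (simp add: mult_le_cancel_right)
  have "c \<le> 1"
  proof (rule ccontr)
    assume "\<not> c \<le> 1"
    then have "c > 1" by simp
    then have "c powr 1 < c powr q" using q by (intro powr_less_mono) auto
    then show False using cq cpos by simp
  qed
  then have "s$i / t$i \<le> 1" using cj[of i] by simp
  then show ?thesis using tp[of i] by (simp add: pos_divide_le_eq)
qed

lemma unit_rows:
  fixes A :: "real^'n^'n"
  assumes S: "\<And>i. i \<in> S \<Longrightarrow> \<exists>j\<in>S. \<forall>l. A $ i $ l = (if l = j then 1 else 0)"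
  shows "i \<in> S \<Longrightarrow> \<exists>j\<in>S. \<forall>l. matrix_pow A k $ i $ l = (if l = j then 1 else 0)"
proof (induction k arbitrary: i)
  case 0
  then show ?case by (auto simp: mat_def)
next
  case (Suc k)
  obtain j0 where j0: "j0 \<in> S" "\<forall>l. A $ i $ l = (if l = j0 then 1 else 0)" using S Suc.prems by blast
  obtain j where j: "j \<in> S" "\<forall>l. matrix_pow A k $ j0 $ l = (if l = j then 1 else 0)"
    using Suc.IH[OF j0(1)] by blast
  have "matrix_pow A (Suc k) $ i $ l = matrix_pow A k $ j0 $ l" for l
  proof -
    have "matrix_pow A (Suc k) $ i $ l = (\<Sum>p\<in>UNIV. A $ i $ p * matrix_pow A k $ p $ l)"
      by (simp add: matrix_matrix_mult_def)
    also have "\<dots> = (\<Sum>p\<in>UNIV. if p = j0 then matrix_pow A k $ p $ l else 0)"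
      using j0(2) by (intro sum.cong) auto
    also have "\<dots> = matrix_pow A k $ j0 $ l" by simp
    finally show ?thesis .
  qed
  then show ?case using j by auto
qed

theorem lemma1p2:
  fixes A :: "real^'n^'n" and q :: real
  assumes "CARD('n) \<ge> 2"
    and "primitive_matrix A"
    and "\<forall>i j. A $ i $ j \<in> {0, 1}"
    and "q > 1"
  shows "\<exists>!t :: real^'n. \<forall>i. t $ i powr q = (\<Sum>j\<in>UNIV. A $ i $ j * t $ j) \<and> t $ i > 1"
proof -
  note card = assms(1) and prim = assms(2) and A01 = assms(3) and q = assms(4)
  have Anon: "A$a$b \<ge> 0" for a b using A01 by (metis insert_iff order_refl singletonD zero_le_one)
  have Ale1: "A$a$b \<le> 1" for a b using A01 by (metis insert_iff order_refl singletonD zero_le_one)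
  define S where "S t i = (\<Sum>j\<in>UNIV. A $ i $ j * t $ j)" for t :: "real^'n" and i
  have Smono: "S t i \<le> S u i" if "\<forall>j. t$j \<le> u$j" for t u i
    unfolding S_def using that by (intro sum_mono mult_left_mono) (auto simp: Anon)
  have Sge1: "S t i \<ge> 1" if "\<forall>j. t$j \<ge> 1" for t i
  proof -
    obtain j where j: "A$i$j = 1" using row_one[OF prim card A01] by blast
    have nn: "0 \<le> A$i$p * t$p" for p
      using Anon[of i p] that[rule_format, of p] by simp
    have "A$i$j * t$j \<le> S t i" unfolding S_def
      by (rule member_le_sum) (use nn in auto)
    then have "t$j \<le> S t i" using j by simp
    then show ?thesis using that[rule_format, of j] by linarith
  qed
  define m where "m = real CARD('n)"
  have m2: "m \<ge> 2" using card unfolding m_def by simp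
  define M where "M = m powr (1/(q-1))"
  have M1: "M \<ge> 1" unfolding M_def using m2 q by (intro ge_one_powr_ge_zero) auto
  have "M powr (q-1) = m" unfolding M_def using m2 q by (simp add: powr_powr)
  then have Mq: "M powr q = m * M"
    using powr_add[of M "q-1" 1] M1 by simp
  have Sle: "S t i \<le> M powr q" if "\<forall>j. t$j \<le> M" "\<forall>j. t$j \<ge> 1" for t i
  proof -
    have tm: "A$i$j * t$j \<le> M" for j
    proof -
      have "A$i$j * t$j \<le> 1 * t$j" using Ale1 that(2)[rule_format, of j]
        by (intro mult_right_mono) auto
      then show "A$i$j * t$j \<le> M" using that(1)[rule_format, of j] by linarith
    qed
    have "S t i \<le> (\<Sum>j\<in>(UNIV::'n set). M)" unfolding S_def
      using tm by (intro sum_mono) auto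
    also have "\<dots> = m * M" unfolding m_def by simp
    finally show ?thesis using Mq by simp
  qed
  define T where "T = {t::real^'n. \<forall>i. 1 \<le> t$i \<and> t$i \<le> M \<and> t$i powr q \<le> S t i}"
  have oneT: "(\<chi> i. (1::real)) \<in> T" unfolding T_def using M1 Sge1[where t="\<chi> i. 1"] by auto
  define u where "u = (\<chi> i. Sup ((\<lambda>t. t$i) ` T))"
  have bdd: "bdd_above ((\<lambda>t. t$i) ` T)" for i
    unfolding T_def bdd_above_def by auto
  have ub: "t$i \<le> u$i" if "t \<in> T" for t i
    unfolding u_def using that bdd by (auto intro: cSup_upper)
  have u1: "1 \<le> u$i" for i using ub[OF oneT, of i] by simp
  have uM: "u$i \<le> M" for i
    unfolding u_def vec_lambda_beta
  proof (rule cSup_least)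
    show "(\<lambda>t. t$i) ` T \<noteq> {}" using oneT by blast
    fix x assume "x \<in> (\<lambda>t. t$i) ` T" then show "x \<le> M" by (auto simp: T_def)
  qed
  define v where "v = (\<chi> i. S u i powr (1/q))"
  have uv: "u$i \<le> v$i" for i
  proof -
    have "t$i \<le> S u i powr (1/q)" if "t \<in> T" for t
    proof -
      have t1: "t$i \<ge> 1" and tq: "t$i powr q \<le> S t i" using that unfolding T_def by auto
      have "S t i \<le> S u i" using ub[OF that] Smono by blast
      with tq have "t$i powr q \<le> S u i" by simp
      then have "(t$i powr q) powr (1/q) \<le> S u i powr (1/q)"
        using q by (intro powr_mono2) auto
      then show ?thesis using t1 q by (simp add: powr_powr)
    qed
    then show ?thesis unfolding u_def v_def vec_lambda_beta
      by (intro cSup_least) (use oneT in auto)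
  qed
  have vT: "v \<in> T"
  proof -
    have "1 \<le> v$i" for i unfolding v_def using Sge1[of u i] u1 q
      by (auto intro: ge_one_powr_ge_zero)
    moreover have "v$i \<le> M" for i
    proof -
      have "S u i powr (1/q) \<le> (M powr q) powr (1/q)"
        using Sle[of u i] uM u1 q Sge1[of u i] by (intro powr_mono2) auto
      then show ?thesis unfolding v_def using q M1 by (simp add: powr_powr)
    qed
    moreover have "v$i powr q \<le> S v i" for i
    proof -
      have "v$i powr q = S u i" unfolding v_def using q Sge1[of u i] u1
        by (simp add: powr_powr)
      also have "\<dots> \<le> S v i" using Smono uv by blast
      finally show ?thesis .
    qed
    ultimately show ?thesis unfolding T_def by auto
  qed
  have uveq: "u$i = v$i" for i using uv[of i] ub[OF vT, of i] by simp
  have ufix: "u$i powr q = S u i" for i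
    using uveq[of i] q Sge1[of u i] u1 unfolding v_def by (simp add: powr_powr)
  have ugt: "u$i > 1" for i
  proof (rule ccontr)
    assume "\<not> u$i > 1"
    then have ui: "u$i = 1" using u1[of i] by simp
    define Z where "Z = {i. u$i = 1}"
    have rows: "\<exists>j\<in>Z. \<forall>l. A $ i $ l = (if l = j then 1 else 0)" if "i \<in> Z" for i
    proof -
      have Si: "S u i = 1" using ufix[of i] that unfolding Z_def by simp
      obtain j where j: "A$i$j = 1" using row_one[OF prim card A01] by blast
      have nn: "0 \<le> A$i$p * u$p" for p using Anon[of i p] u1[of p] by simp
      have ujle: "A$i$j * u$j \<le> S u i" unfolding S_def
        by (rule member_le_sum) (use nn in auto)
      then have uj: "u$j = 1" using j Si u1[of j] by simp
      have other: "A$i$l = 0" if "l \<noteq> j" for l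
      proof -
        have "(\<Sum>p\<in>{j,l}. A$i$p * u$p) \<le> S u i" unfolding S_def
          by (rule sum_mono2) (use nn in auto)
        then have "A$i$j * u$j + A$i$l * u$l \<le> 1" using that Si by simp
        then have "A$i$l * u$l \<le> 0" using j uj by simp
        moreover have "A$i$l = 0 \<or> A$i$l = 1" using A01 by auto
        ultimately show ?thesis using u1[of l] by auto
      qed
      show ?thesis using j uj other unfolding Z_def by (intro bexI[of _ j]) auto
    qed
    obtain k where k: "\<forall>i j. matrix_pow A k $ i $ j > 0"
      using prim unfolding primitive_matrix_def by auto
    have "i \<in> Z" using ui unfolding Z_def by simp
    then obtain j where "\<forall>l. matrix_pow A k $ i $ l = (if l = j then 1 else 0)"
      using unit_rows[of Z A, OF rows] by blast
    moreover obtain l where "l \<noteq> j" using exists_other[OF card] by blast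
    ultimately have "matrix_pow A k $ i $ l = 0" by simp
    then show False using k by (metis less_irrefl)
  qed
  have sol: "\<forall>i. u $ i powr q = (\<Sum>j\<in>UNIV. A $ i $ j * u $ j) \<and> u $ i > 1"
    using ufix ugt unfolding S_def by auto
  show ?thesis
  proof (rule ex1I[of _ u])
    show "\<forall>i. u $ i powr q = (\<Sum>j\<in>UNIV. A $ i $ j * u $ j) \<and> u $ i > 1" by (rule sol)
  next
    fix t assume t: "\<forall>i. t $ i powr q = (\<Sum>j\<in>UNIV. A $ i $ j * t $ j) \<and> t $ i > 1"
    show "t = u"
    proof (rule vec_eq_iff[THEN iffD2], rule allI)
      fix i
      show "t$i = u$i" using uniq_le[OF A01 q t sol, of i] uniq_le[OF A01 q sol t, of i] by simp
    qed
  qed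
qed

end
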